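(* Let $(M,\Gamma,\le)$ be a $po$-$\Gamma$-groupoid and let $f$ be a fuzzy subset of $M$. Then $f$ is a fuzzy right ideal of $M$ if and only if (1) $f\circ 1\preceq f$ and (2) for all $x,y\in M$, if $x\le y$ then $f(x)\ge f(y)$.
   Context: Let $M$ and $\Gamma$ be nonempty sets with a map $M\times\Gamma\times M\to M$, $(a,\gamma,b)\mapsto a\gamma b$. A $po$-$\Gamma$-groupoid is such an $M$ with a partial order $\le$ on $M$ such that $a\le b$ implies $a\gamma c\le b\gamma c$ and $c\gamma a\le c\gamma b$ for all $c\in M$, $\gamma\in\Gamma$. A fuzzy subset of $M$ is a map $M\to[0,1]$. For $a\in M$ let $A_a=\{(y,z)\in M\times M : a\le y\gamma z \text{ for some } \gamma\in\Gamma\}$. For fuzzy subsets $f,g$, define $(f\circ g)(a)=\bigvee_{(y,z)\in A_a}\min\{f(y),g(z)\}$ if $A_a\neq\emptyset$ and $(f\circ g)(a)=0$ if $A_a=\emptyset$. $f\preceq g$ means $f(a)\le g(a)$ for all $a\in M$. $1$ denotes the fuzzy subset with $1(x)=1$ for all $x\in M$. A fuzzy right ideal of $M$ is a fuzzy subset $f$ with $f(x\gamma y)\ge f(x)$ for all $x,y\in M$, $\gamma\in\Gamma$, and such that $x\le y$ implies $f(x)\ge f(y)$. *)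

theory Defs
  imports Main "HOL.Real"
begin

(* M is modelled by the type 'm, Gamma by the type 'g (both nonempty automatically).
   The ternary operation is mult a \<gamma> b, the partial order is le. *)

definition po_gamma_groupoid :: "('m \<Rightarrow> 'g \<Rightarrow> 'm \<Rightarrow> 'm) \<Rightarrow> ('m \<Rightarrow> 'm \<Rightarrow> bool) \<Rightarrow> bool" where
  "po_gamma_groupoid mult le \<longleftrightarrow>
     (\<forall>a. le a a) \<and> (\<forall>a b. le a b \<and> le b a \<longrightarrow> a = b) \<and>
     (\<forall>a b c. le a b \<and> le b c \<longrightarrow> le a c) \<and>
     (\<forall>a b c \<gamma>. le a b \<longrightarrow> le (mult a \<gamma> c) (mult b \<gamma> c) \<and> le (mult c \<gamma> a) (mult c \<gamma> b))"

definition fuzzy_subset :: "('m \<Rightarrow> real) \<Rightarrow> bool" where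
  "fuzzy_subset f \<longleftrightarrow> (\<forall>x. 0 \<le> f x \<and> f x \<le> 1)"

definition A_set :: "('m \<Rightarrow> 'g \<Rightarrow> 'm \<Rightarrow> 'm) \<Rightarrow> ('m \<Rightarrow> 'm \<Rightarrow> bool) \<Rightarrow> 'm \<Rightarrow> ('m \<times> 'm) set" where
  "A_set mult le a = {(y, z). \<exists>\<gamma>. le a (mult y \<gamma> z)}"

definition fuzzy_comp :: "('m \<Rightarrow> 'g \<Rightarrow> 'm \<Rightarrow> 'm) \<Rightarrow> ('m \<Rightarrow> 'm \<Rightarrow> bool) \<Rightarrow>
    ('m \<Rightarrow> real) \<Rightarrow> ('m \<Rightarrow> real) \<Rightarrow> 'm \<Rightarrow> real" where
  "fuzzy_comp mult le f g a =
     (if A_set mult le a = {} then 0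
      else Sup ((\<lambda>(y, z). min (f y) (g z)) ` A_set mult le a))"

definition fuzzy_le :: "('m \<Rightarrow> real) \<Rightarrow> ('m \<Rightarrow> real) \<Rightarrow> bool" where
  "fuzzy_le f g \<longleftrightarrow> (\<forall>a. f a \<le> g a)"

definition fuzzy_one :: "'m \<Rightarrow> real" where
  "fuzzy_one = (\<lambda>_. 1)"

definition fuzzy_right_ideal :: "('m \<Rightarrow> 'g \<Rightarrow> 'm \<Rightarrow> 'm) \<Rightarrow> ('m \<Rightarrow> 'm \<Rightarrow> bool) \<Rightarrow> ('m \<Rightarrow> real) \<Rightarrow> bool" where
  "fuzzy_right_ideal mult le f \<longleftrightarrow>
     fuzzy_subset f \<and>
     (\<forall>x y \<gamma>. f (mult x \<gamma> y) \<ge> f x) \<and>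
     (\<forall>x y. le x y \<longrightarrow> f x \<ge> f y)"

end

theory Submission
  imports Defs
begin

theorem proposition4:
  fixes mult :: "'m \<Rightarrow> 'g \<Rightarrow> 'm \<Rightarrow> 'm" and le :: "'m \<Rightarrow> 'm \<Rightarrow> bool" and f :: "'m \<Rightarrow> real"
  assumes "po_gamma_groupoid mult le"
    and "fuzzy_subset f"
  shows "fuzzy_right_ideal mult le f \<longleftrightarrow>
           (fuzzy_le (fuzzy_comp mult le f fuzzy_one) f \<and>
            (\<forall>x y. le x y \<longrightarrow> f x \<ge> f y))"
proof
  assume H: "fuzzy_right_ideal mult le f"
  have mono: "\<forall>x y. le x y \<longrightarrow> f x \<ge> f y" using H unfolding fuzzy_right_ideal_def by blast
  have r: "\<And>x y \<gamma>. f (mult x \<gamma> y) \<ge> f x" using H unfolding fuzzy_right_ideal_def by blast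
  have "fuzzy_comp mult le f fuzzy_one a \<le> f a" for a
  proof (cases "A_set mult le a = {}")
    case True then show ?thesis using assms(2) by (simp add: fuzzy_comp_def fuzzy_subset_def)
  next
    case False
    have "Sup ((\<lambda>(y, z). min (f y) (fuzzy_one z)) ` A_set mult le a) \<le> f a"
    proof (rule cSup_least)
      show "(\<lambda>(y, z). min (f y) (fuzzy_one z)) ` A_set mult le a \<noteq> {}" using False by blast
    next
      fix v assume "v \<in> (\<lambda>(y, z). min (f y) (fuzzy_one z)) ` A_set mult le a"
      then obtain y z \<gamma> where v: "v = min (f y) (fuzzy_one z)" and l: "le a (mult y \<gamma> z)"
        unfolding A_set_def by auto
      have "f a \<ge> f (mult y \<gamma> z)" using mono l by blast
      moreover have "f (mult y \<gamma> z) \<ge> f y" using r by blast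
      ultimately show "v \<le> f a" using v by linarith
    qed
    then show ?thesis using False by (simp add: fuzzy_comp_def)
  qed
  then show "fuzzy_le (fuzzy_comp mult le f fuzzy_one) f \<and> (\<forall>x y. le x y \<longrightarrow> f x \<ge> f y)"
    using mono by (simp add: fuzzy_le_def)
next
  assume H: "fuzzy_le (fuzzy_comp mult le f fuzzy_one) f \<and> (\<forall>x y. le x y \<longrightarrow> f x \<ge> f y)"
  have refl: "\<And>a. le a a" using assms(1) unfolding po_gamma_groupoid_def by blast
  have "f (mult x \<gamma> y) \<ge> f x" for x y \<gamma>
  proof -
    let ?a = "mult x \<gamma> y"
    have mem: "(x, y) \<in> A_set mult le ?a" unfolding A_set_def using refl by blast
    hence ne: "A_set mult le ?a \<noteq> {}" by blast
    have bdd: "bdd_above ((\<lambda>(y, z). min (f y) (fuzzy_one z)) ` A_set mult le ?a)"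
      by (rule bdd_aboveI[where M=1]) (auto simp: fuzzy_one_def)
    have "min (f x) (fuzzy_one y) \<le> Sup ((\<lambda>(y, z). min (f y) (fuzzy_one z)) ` A_set mult le ?a)"
      by (rule cSup_upper[OF _ bdd]) (use mem in force)
    moreover have "min (f x) (fuzzy_one y) = f x"
      using assms(2) by (simp add: fuzzy_one_def fuzzy_subset_def)
    moreover have "fuzzy_comp mult le f fuzzy_one ?a \<le> f ?a" using H by (simp add: fuzzy_le_def)
    ultimately show ?thesis using ne by (simp add: fuzzy_comp_def)
  qed
  then show "fuzzy_right_ideal mult le f" using H assms(2) unfolding fuzzy_right_ideal_def by blast
qed

end
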